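(* For every $k$-hyperdigraph $H$, $pc(H)\le \alpha(H)$.
   Context: For $2\le k\le n$, a $k$-hyperdigraph $H$ on $n$ vertices is a pair $(V,A)$ where $V$ is a set of $n$ vertices and $A$ is a set of $k$-tuples of distinct vertices (hyperarcs) such that for each $k$-subset $S\subseteq V$, $A$ contains at most one of the $k!$ orderings of $S$. For a hyperarc $a=(x_1\dots x_k)$, $x_i$ precedes $x_j$ in $a$ if $i<j$. A path is an alternating sequence $x_1a_1x_2\dots x_ma_mx_{m+1}$ ($m\ge 0$) of distinct vertices and distinct hyperarcs with $x_i$ preceding $x_{i+1}$ in $a_i$. The path covering number $pc(H)$ is the minimum number of vertex-disjoint paths (using distinct hyperarcs) covering $V$. A set $I\subseteq V$ is independent if no hyperarc of $H$ has all its vertices in $I$; the independence number $\alpha(H)$ is the maximum size of an independent set. *)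

theory Defs
  imports Main
begin

definition hyperdigraph :: "nat \<Rightarrow> 'a set \<Rightarrow> 'a list set \<Rightarrow> bool" where
  "hyperdigraph k V A \<longleftrightarrow> finite V \<and> 2 \<le> k \<and> k \<le> card V \<and>
     (\<forall>a\<in>A. length a = k \<and> distinct a \<and> set a \<subseteq> V) \<and>
     (\<forall>a\<in>A. \<forall>b\<in>A. set a = set b \<longrightarrow> a = b)"

definition precedes :: "'a \<Rightarrow> 'a \<Rightarrow> 'a list \<Rightarrow> bool" where
  "precedes x y a \<longleftrightarrow> (\<exists>i j. i < j \<and> j < length a \<and> a ! i = x \<and> a ! j = y)"

definition is_path :: "'a list set \<Rightarrow> 'a list \<times> 'a list list \<Rightarrow> bool" where
  "is_path A p \<longleftrightarrow> (case p of (xs, as) \<Rightarrow>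
     xs \<noteq> [] \<and> distinct xs \<and> distinct as \<and> length as + 1 = length xs \<and>
     set as \<subseteq> A \<and>
     (\<forall>i < length as. precedes (xs ! i) (xs ! Suc i) (as ! i)))"

definition path_cover :: "'a set \<Rightarrow> 'a list set \<Rightarrow> ('a list \<times> 'a list list) list \<Rightarrow> bool" where
  "path_cover V A P \<longleftrightarrow>
     (\<forall>p\<in>set P. is_path A p) \<and>
     (\<forall>i < length P. \<forall>j < length P. i \<noteq> j \<longrightarrow> set (fst (P ! i)) \<inter> set (fst (P ! j)) = {}) \<and>
     distinct (concat (map snd P)) \<and>
     (\<Union>p\<in>set P. set (fst p)) = V"

definition pc :: "'a set \<Rightarrow> 'a list set \<Rightarrow> nat" where
  "pc V A = (LEAST m. \<exists>P. path_cover V A P \<and> length P = m)"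

definition independent :: "'a list set \<Rightarrow> 'a set \<Rightarrow> bool" where
  "independent A I \<longleftrightarrow> (\<forall>a\<in>A. \<not> set a \<subseteq> I)"

definition alpha :: "'a set \<Rightarrow> 'a list set \<Rightarrow> nat" where
  "alpha V A = Max {card I | I. I \<subseteq> V \<and> independent A I}"

end

theory Submission
  imports Defs "HOL-Library.Multiset"
begin

definition cover' :: "'a set \<Rightarrow> 'a list set \<Rightarrow> ('a list \<times> 'a list list) list \<Rightarrow> bool" where
  "cover' V A P \<longleftrightarrow> (\<forall>p\<in>set P. is_path A p) \<and> distinct (concat (map fst P)) \<and>
     distinct (concat (map snd P)) \<and> set (concat (map fst P)) = V"

definition ter :: "('a list \<times> 'a list list) list \<Rightarrow> 'a set" where
  "ter P = (\<lambda>p. last (fst p)) ` set P"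

lemma mset_concat_eq:
  assumes "mset P = mset Q"
  shows "mset (concat (map f P)) = mset (concat (map f Q))"
proof -
  have "mset (concat (map f P)) = sum_mset (image_mset (mset \<circ> f) (mset P))"
    by (simp add: mset_concat sum_mset_sum_list[symmetric] map_map)
  also have "\<dots> = sum_mset (image_mset (mset \<circ> f) (mset Q))" using assms by simp
  also have "\<dots> = mset (concat (map f Q))"
    by (simp add: mset_concat sum_mset_sum_list[symmetric] map_map)
  finally show ?thesis .
qed

lemma cover'_mset:
  assumes "mset P = mset Q" "cover' V A P"
  shows "cover' V A Q"
proof -
  have s: "set P = set Q" using assms(1) by (metis mset_eq_setD)
  have 1: "mset (concat (map fst P)) = mset (concat (map fst Q))" using mset_concat_eq[OF assms(1)] .
  have 2: "mset (concat (map snd P)) = mset (concat (map snd Q))" using mset_concat_eq[OF assms(1)] .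
  show ?thesis using assms(2) s mset_eq_imp_distinct_iff[OF 1] mset_eq_imp_distinct_iff[OF 2]
      mset_eq_setD[OF 1]
    unfolding cover'_def by simp
qed

lemma is_path_snoc:
  assumes "xs \<noteq> []"
  shows "is_path A (xs @ [w], as @ [c]) \<longleftrightarrow>
    is_path A (xs, as) \<and> w \<notin> set xs \<and> c \<notin> set as \<and> c \<in> A \<and> precedes (last xs) w c"
proof -
  have L: "length as + 1 = length xs \<Longrightarrow>
    (\<forall>i < length (as @ [c]). precedes ((xs @ [w]) ! i) ((xs @ [w]) ! Suc i) ((as @ [c]) ! i))
    \<longleftrightarrow> (\<forall>i < length as. precedes (xs ! i) (xs ! Suc i) (as ! i)) \<and> precedes (last xs) w c"
  proof -
    assume len: "length as + 1 = length xs"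
    have "(\<forall>i < length (as @ [c]). precedes ((xs @ [w]) ! i) ((xs @ [w]) ! Suc i) ((as @ [c]) ! i))
      \<longleftrightarrow> (\<forall>i < Suc (length as). precedes ((xs @ [w]) ! i) ((xs @ [w]) ! Suc i) ((as @ [c]) ! i))"
      by simp
    also have "\<dots> \<longleftrightarrow> (\<forall>i < length as. precedes ((xs @ [w]) ! i) ((xs @ [w]) ! Suc i) ((as @ [c]) ! i))
       \<and> precedes ((xs @ [w]) ! length as) ((xs @ [w]) ! Suc (length as)) ((as @ [c]) ! length as)"
      by (auto simp: less_Suc_eq)
    also have "\<dots> \<longleftrightarrow> (\<forall>i < length as. precedes (xs ! i) (xs ! Suc i) (as ! i)) \<and> precedes (last xs) w c"
    proof -
      have "\<forall>i < length as. (xs @ [w]) ! i = xs ! i \<and> (xs @ [w]) ! Suc i = xs ! Suc i \<and> (as @ [c]) ! i = as ! i"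
        using len by (auto simp: nth_append)
      moreover have "(xs @ [w]) ! length as = last xs" using len assms
      proof -
        have "length as = length xs - 1" using len by simp
        then show ?thesis using assms by (simp add: nth_append last_conv_nth)
      qed
      moreover have "(xs @ [w]) ! Suc (length as) = w" using len by (simp add: nth_append)
      ultimately show ?thesis by simp
    qed
    finally show ?thesis .
  qed
  show ?thesis
    unfolding is_path_def using L assms by auto
qed

lemma is_path_ne: "is_path A p \<Longrightarrow> fst p \<noteq> []"
  unfolding is_path_def by (auto split: prod.splits)

lemma cover'_ter_distinct:
  assumes "cover' V A P" shows "distinct (map (\<lambda>p. last (fst p)) P)"
proof -
  have *: "(\<forall>p\<in>set P. fst p \<noteq> []) \<Longrightarrow> distinct (concat (map fst P)) \<Longrightarrow> distinct (map (\<lambda>p. last (fst p)) P)"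
  proof (induction P)
    case Nil then show ?case by simp
  next
    case (Cons p Q)
    have d: "distinct (fst p @ concat (map fst Q))" using Cons.prems(2) by simp
    have dQ: "distinct (concat (map fst Q))" using d by simp
    have neQ: "\<forall>p\<in>set Q. fst p \<noteq> []" using Cons.prems(1) by simp
    have IH: "distinct (map (\<lambda>p. last (fst p)) Q)" using Cons.IH[OF neQ dQ] .
    have l1: "last (fst p) \<in> set (fst p)" using Cons.prems(1) by simp
    have l2: "last (fst q) \<in> set (concat (map fst Q))" if "q \<in> set Q" for q
    proof -
      have "last (fst q) \<in> set (fst q)" using neQ that by simp
      then show ?thesis using that by auto
    qed
    have "last (fst p) \<notin> set (map (\<lambda>p. last (fst p)) Q)"
    proof
      assume "last (fst p) \<in> set (map (\<lambda>p. last (fst p)) Q)"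
      then obtain q where "q \<in> set Q" "last (fst p) = last (fst q)" by auto
      then have "last (fst p) \<in> set (concat (map fst Q))" using l2 by simp
      then show False using l1 d by (simp only: distinct_append) blast
    qed
    then show ?case using IH by simp
  qed
  have "\<forall>p\<in>set P. fst p \<noteq> []" using assms is_path_ne unfolding cover'_def by blast
  moreover have "distinct (concat (map fst P))" using assms unfolding cover'_def by blast
  ultimately show ?thesis using * by blast
qed

lemma cover'_card_ter: assumes "cover' V A P" shows "card (ter P) = length P"
proof -
  have "ter P = set (map (\<lambda>p. last (fst p)) P)" unfolding ter_def by simp
  then show ?thesis using distinct_card[OF cover'_ter_distinct[OF assms]] by simp
qed

lemma cover'_disj:
  assumes "cover' V A P" "p \<in> set P" "q \<in> set P" "p \<noteq> q"
  shows "set (fst p) \<inter> set (fst q) = {}"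
proof -
  have C: "cover' V A (p # remove1 p P)" using cover'_mset[OF _ assms(1), of "p # remove1 p P"] assms(2) by simp
  have q: "q \<in> set (remove1 p P)" using assms(2-4) by (metis in_set_remove1)
  have d: "distinct (fst p @ concat (map fst (remove1 p P)))" using C unfolding cover'_def by simp
  have "set (fst q) \<subseteq> set (concat (map fst (remove1 p P)))" using q by auto
  then show ?thesis using d by (simp only: distinct_append) blast
qed

lemma is_path_arcs: "is_path A p \<Longrightarrow> set (snd p) \<subseteq> A"
  by (cases p) (simp add: is_path_def)

lemma is_path_mono: "is_path A p \<Longrightarrow> A \<subseteq> B \<Longrightarrow> is_path B p"
  by (cases p) (auto simp: is_path_def)

lemma cover'_arcs: "cover' V A P \<Longrightarrow> set (concat (map snd P)) \<subseteq> A"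
  unfolding cover'_def using is_path_arcs by fastforce

lemma cover'_ter_sub: assumes "cover' V A P" shows "ter P \<subseteq> V"
proof
  fix x assume "x \<in> ter P"
  then obtain p where p: "p \<in> set P" "x = last (fst p)" unfolding ter_def by auto
  have "fst p \<noteq> []" using p assms is_path_ne unfolding cover'_def by blast
  then have "x \<in> set (fst p)" using p by simp
  then show "x \<in> V" using p assms unfolding cover'_def by auto
qed

lemma cover'_mono: "cover' V A P \<Longrightarrow> A \<subseteq> B \<Longrightarrow> cover' V B P"
  unfolding cover'_def using is_path_mono by blast

lemma mset_remove1_cons: "q \<in> set Q \<Longrightarrow> mset Q = mset (q # remove1 q Q)"
  by simp

lemma extend:
  assumes "cover' V A Q" "q \<in> set Q" "w \<notin> V" "c \<in> B" "c \<notin> set (concat (map snd Q))"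
    "precedes (last (fst q)) w c" "A \<subseteq> B"
  shows "cover' (insert w V) B ((fst q @ [w], snd q @ [c]) # remove1 q Q)
     \<and> length ((fst q @ [w], snd q @ [c]) # remove1 q Q) = length Q
     \<and> ter ((fst q @ [w], snd q @ [c]) # remove1 q Q) = insert w (ter Q - {last (fst q)})"
proof -
  define R where "R = remove1 q Q"
  have C: "cover' V B (q # R)"
    using cover'_mset[OF mset_remove1_cons[OF assms(2)] cover'_mono[OF assms(1,7)]] R_def by simp
  obtain xs as where q: "q = (xs, as)" by fastforce
  have Cp: "is_path B q" using C unfolding cover'_def by simp
  have ne: "xs \<noteq> []" using Cp q is_path_ne by fastforce
  have "set xs \<subseteq> V" using C q unfolding cover'_def by auto
  then have wx: "w \<notin> set xs" using assms(3) by auto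
  have cas: "c \<notin> set as" using assms(5,2) q by auto
  have pq: "is_path B (xs @ [w], as @ [c])"
    using is_path_snoc[OF ne] Cp q wx cas assms(4,6) by simp
  have CR: "\<forall>p\<in>set R. is_path B p" "distinct (xs @ concat (map fst R))"
    "distinct (as @ concat (map snd R))" "set xs \<union> set (concat (map fst R)) = V"
    using C q unfolding cover'_def by simp_all
  have "mset (concat (map snd Q)) = mset (concat (map snd (q # R)))"
    using mset_concat_eq[OF mset_remove1_cons[OF assms(2)]] R_def by simp
  then have "set (concat (map snd Q)) = set (concat (map snd (q # R)))" by (metis mset_eq_setD)
  then have cR: "c \<notin> set (concat (map snd R))" using assms(5) q by simp
  have c1: "cover' (insert w V) B ((xs @ [w], as @ [c]) # R)"
    unfolding cover'_def using CR pq cas cR wx assms(3) by auto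
  have d: "distinct (map (\<lambda>p. last (fst p)) (q # R))" using cover'_ter_distinct[OF C] .
  have "ter Q = ter (q # R)" using mset_remove1_cons[OF assms(2)] R_def unfolding ter_def
    by (metis mset_eq_setD)
  moreover have "ter (q # R) = insert (last xs) (ter R)" "last xs \<notin> ter R"
    using d q unfolding ter_def by auto
  ultimately have "ter ((xs @ [w], as @ [c]) # R) = insert w (ter Q - {last (fst q)})"
    using q unfolding ter_def by auto
  moreover have "length ((xs @ [w], as @ [c]) # R) = length Q" using R_def assms(2)
    by (simp add: length_remove1) (metis One_nat_def Suc_pred length_pos_if_in_set)
  ultimately show ?thesis using c1 q R_def by simp
qed

lemma precedes_mem: "precedes x y a \<Longrightarrow> x \<in> set a \<and> y \<in> set a"
  unfolding precedes_def by auto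

lemma unused:
  assumes "cover' V A P" "set a \<subseteq> ter P"
  shows "a \<notin> set (concat (map snd P))"
proof
  assume "a \<in> set (concat (map snd P))"
  then obtain p where p: "p \<in> set P" "a \<in> set (snd p)" by auto
  obtain xs as where pxs: "p = (xs, as)" by fastforce
  have "is_path A p" using assms(1) p(1) unfolding cover'_def by blast
  then have ip: "is_path A (xs, as)" using pxs by simp
  have "a \<in> set as" using p(2) pxs by simp
  then obtain t where t: "t < length as" "as ! t = a" by (meson in_set_conv_nth)
  have "\<forall>i<length as. precedes (xs!i) (xs!Suc i) (as!i)" using ip unfolding is_path_def by simp
  then have "precedes (xs ! t) (xs ! Suc t) (as ! t)" using t(1) by blast
  then have "precedes (xs ! t) (xs ! Suc t) a" using t(2) by simp
  then have "xs ! t \<in> set a" using precedes_mem[of "xs ! t" "xs ! Suc t" a] by simp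
  then have "xs ! t \<in> ter P" using assms(2) by blast
  then obtain p' where p': "p' \<in> set P" "last (fst p') = xs ! t" unfolding ter_def by auto
  have len: "length as + 1 = length xs" "distinct xs" "xs \<noteq> []" using ip unfolding is_path_def by simp_all
  show False
  proof (cases "p' = p")
    case True
    then have "xs ! (length xs - 1) = xs ! t" using p' pxs len by (simp add: last_conv_nth)
    moreover have "length xs - 1 < length xs" "t < length xs" using len t by simp_all
    ultimately have "length xs - 1 = t" using len(2) nth_eq_iff_index_eq by blast
    then show False using len t by simp
  next
    case False
    have "fst p' \<noteq> []" using p' assms(1) is_path_ne unfolding cover'_def by blast
    then have "xs ! t \<in> set (fst p')" using p' by (metis last_in_set)
    moreover have "xs ! t \<in> set xs" using len t by simp
    ultimately show False using cover'_disj[OF assms(1) p(1) p'(1)] False pxs by auto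
  qed
qed

lemma is_path_restrict: "is_path A p \<Longrightarrow> set (snd p) \<subseteq> B \<Longrightarrow> is_path B p"
  by (cases p) (auto simp: is_path_def)

lemma ter_card_le: "card (ter P) \<le> length P"
proof -
  have "ter P = set (map (\<lambda>p. last (fst p)) P)" unfolding ter_def by simp
  then show ?thesis using card_length[of "map (\<lambda>p. last (fst p)) P"] by simp
qed

lemma main:
  assumes "finite V" "\<forall>a\<in>A. 2 \<le> length a \<and> distinct a" "cover' V A P"
    "\<forall>I. I \<subseteq> V \<longrightarrow> independent A I \<longrightarrow> card I < length P"
  shows "\<exists>P'. cover' V A P' \<and> length P' + 1 = length P \<and> ter P' \<subseteq> ter P"
  using assms
proof (induction "card V" arbitrary: V A P rule: less_induct)
  case less
  note fin = less.prems(1) and arcs = less.prems(2) and C0 = less.prems(3) and ind = less.prems(4)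
  have tV: "ter P \<subseteq> V" using cover'_ter_sub[OF C0] .
  moreover have "card (ter P) = length P" using cover'_card_ter[OF C0] .
  ultimately have "\<not> independent A (ter P)" using ind by auto
  then obtain a where a: "a \<in> A" "set a \<subseteq> ter P" unfolding independent_def by auto
  have la: "2 \<le> length a" "distinct a" using arcs a(1) by auto
  define u where "u = a ! 0"
  define w where "w = a ! 1"
  have prec: "precedes u w a" unfolding precedes_def u_def w_def using la
    by (intro exI[of _ 0] exI[of _ 1]) auto
  have uw: "u \<noteq> w" using la nth_eq_iff_index_eq[of a 0 1] unfolding u_def w_def by force
  have l0: "0 < length a" "1 < length a" using la by auto
  have ua: "u \<in> set a" unfolding u_def by (rule nth_mem[OF l0(1)])
  have wa: "w \<in> set a" unfolding w_def by (rule nth_mem[OF l0(2)])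
  note ua wa
  then have "u \<in> ter P" "w \<in> ter P" using a by auto
  then obtain pi pj where pi: "pi \<in> set P" "last (fst pi) = u" and pj: "pj \<in> set P" "last (fst pj) = w"
    unfolding ter_def by auto
  have wV: "w \<in> V" using tV \<open>w \<in> ter P\<close> by auto
  have pij: "pi \<noteq> pj" using pi pj uw by auto
  have anot: "a \<notin> set (concat (map snd P))" using unused[OF C0 a(2)] .
  define rest where "rest = remove1 pi (remove1 pj P)"
  have m1: "mset P = mset (pj # remove1 pj P)" using mset_remove1_cons[OF pj(1)] .
  have "pi \<in> set (remove1 pj P)" using pi(1) pij by (metis in_set_remove1)
  then have m2: "mset (remove1 pj P) = mset (pi # rest)" using mset_remove1_cons[of pi "remove1 pj P"] unfolding rest_def by simp
  have ms: "mset P = mset (pi # pj # rest)" using m1 m2 by (simp add: add_mset_commute)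
  have C: "cover' V A (pi # pj # rest)" using cover'_mset[OF ms C0] .
  have lenP: "length P = length rest + 2" using ms by (metis size_mset length_Cons add_2_eq_Suc')
  have "set P = set (pi # pj # rest)" using ms by (metis mset_eq_setD)
  then have terP: "ter P = {u, w} \<union> ter rest" unfolding ter_def using pi pj by auto
  have "mset (concat (map snd P)) = mset (concat (map snd (pi # pj # rest)))"
    using mset_concat_eq[OF ms] .
  then have setsnd: "set (concat (map snd P)) = set (concat (map snd (pi # pj # rest)))"
    by (metis mset_eq_setD)
  obtain ys bs where pjs: "pj = (ys, bs)" by fastforce
  have ipj: "is_path A (ys, bs)" using C pjs unfolding cover'_def by simp
  have ys: "ys \<noteq> []" "last ys = w" "length bs + 1 = length ys" using ipj pj pjs unfolding is_path_def by auto
  show ?case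
  proof (cases "length ys = 1")
    case True
    then have ysw: "ys = [w]" using ys by (cases ys) auto
    have bs0: "bs = []" using ys True by simp
    define Q where "Q = pi # rest"
    have CQ: "cover' (V - {w}) A Q"
      using C pjs ysw bs0 unfolding cover'_def Q_def by auto
    have "a \<notin> set (concat (map snd Q))" using anot setsnd unfolding Q_def by auto
    moreover have "pi \<in> set Q" unfolding Q_def by simp
    ultimately have E: "cover' (insert w (V - {w})) A ((fst pi @ [w], snd pi @ [a]) # remove1 pi Q)
     \<and> length ((fst pi @ [w], snd pi @ [a]) # remove1 pi Q) = length Q
     \<and> ter ((fst pi @ [w], snd pi @ [a]) # remove1 pi Q) = insert w (ter Q - {last (fst pi)})"
      using extend[OF CQ, of pi w a A] a(1) prec pi(2) by auto
    have "ter Q \<subseteq> {u} \<union> ter rest" unfolding Q_def ter_def using pi by auto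
    then show ?thesis using E wV lenP terP unfolding Q_def
      by (intro exI[of _ "(fst pi @ [w], snd pi @ [a]) # remove1 pi Q"]) (auto simp: insert_absorb Q_def)
  next
    case False
    moreover have "length ys \<noteq> 0" using ys(1) by simp
    ultimately have l2: "2 \<le> length ys" by linarith
    define ys0 where "ys0 = butlast ys"
    define bs0 where "bs0 = butlast bs"
    define b where "b = last bs"
    have bsne: "bs \<noteq> []" using ys l2 by auto
    have ysd: "ys = ys0 @ [w]" using ys unfolding ys0_def by (metis append_butlast_last_id)
    have bsd: "bs = bs0 @ [b]" using bsne unfolding bs0_def b_def by simp
    have ys0ne: "ys0 \<noteq> []" using l2 unfolding ys0_def by (cases ys) auto
    have sn: "is_path A (ys0, bs0)" "w \<notin> set ys0" "b \<notin> set bs0" "b \<in> A" "precedes (last ys0) w b"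
      using is_path_snoc[OF ys0ne, of A w bs0 b] ipj ysd bsd by simp_all
    define v where "v = last ys0"
    define A' where "A' = A - {a, b}"
    define P0 where "P0 = pi # (ys0, bs0) # rest"
    have Cf: "is_path A pi" "\<forall>p\<in>set rest. is_path A p"
      "distinct (fst pi @ (ys0 @ [w]) @ concat (map fst rest))"
      "distinct (snd pi @ (bs0 @ [b]) @ concat (map snd rest))"
      "set (fst pi) \<union> set (ys0 @ [w]) \<union> set (concat (map fst rest)) = V"
      using C pjs ysd bsd unfolding cover'_def by auto
    have an: "a \<notin> set (snd pi)" "a \<notin> set bs0" "a \<notin> set (concat (map snd rest))"
      using anot setsnd pjs bsd by auto
    have p1: "is_path A' pi"
    proof (rule is_path_restrict[OF Cf(1)])
      show "set (snd pi) \<subseteq> A'" using is_path_arcs[OF Cf(1)] an(1) Cf(4) unfolding A'_def by auto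
    qed
    have p2: "is_path A' (ys0, bs0)"
    proof (rule is_path_restrict[OF sn(1)])
      show "set (snd (ys0, bs0)) \<subseteq> A'" using is_path_arcs[OF sn(1)] an(2) sn(3) unfolding A'_def by auto
    qed
    have p3: "\<forall>p\<in>set rest. is_path A' p"
    proof
      fix p assume p: "p \<in> set rest"
      have "set (snd p) \<subseteq> set (concat (map snd rest))" using p by auto
      moreover have "b \<notin> set (concat (map snd rest))" using Cf(4) by auto
      ultimately have "set (snd p) \<subseteq> A'" using is_path_arcs Cf(2) p an(3) unfolding A'_def by blast
      then show "is_path A' p" using is_path_restrict Cf(2) p by blast
    qed
    have CP0: "cover' (V - {w}) A' P0"
      unfolding cover'_def P0_def using p1 p2 p3 Cf(3,4,5) by auto
    have wb: "w \<in> set b" using precedes_mem[OF sn(5)] by simp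
    have ind': "\<forall>I. I \<subseteq> V - {w} \<longrightarrow> independent A' I \<longrightarrow> card I < length P0"
    proof (intro allI impI)
      fix I assume I: "I \<subseteq> V - {w}" "independent A' I"
      have "independent A I" unfolding independent_def
      proof
        fix c assume c: "c \<in> A"
        show "\<not> set c \<subseteq> I"
        proof (cases "c = a \<or> c = b")
          case True then show ?thesis using wa wb I(1) by auto
        next
          case False then show ?thesis using I(2) c unfolding independent_def A'_def by auto
        qed
      qed
      then have "card I < length P" using ind I(1) by auto
      then show "card I < length P0" using lenP unfolding P0_def by simp
    qed
    have lt: "card (V - {w}) < card V" using fin wV by (meson card_Diff1_less)
    have arcs': "\<forall>c\<in>A'. 2 \<le> length c \<and> distinct c" using arcs unfolding A'_def by auto
    obtain P'' where P'': "cover' (V - {w}) A' P''" "length P'' + 1 = length P0" "ter P'' \<subseteq> ter P0"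
      using less.hyps[OF lt _ arcs' CP0 ind'] fin by blast
    have terP0: "ter P0 = {u, v} \<union> ter rest" unfolding P0_def ter_def v_def using pi by auto
    have abn: "a \<notin> set (concat (map snd P''))" "b \<notin> set (concat (map snd P''))"
      using cover'_arcs[OF P''(1)] unfolding A'_def by auto
    have A'A: "A' \<subseteq> A" unfolding A'_def by auto
    have lP'': "length P'' + 1 = length P" using P''(2) lenP unfolding P0_def by simp
    have wnot: "w \<notin> V - {w}" by simp
    have VV: "insert w (V - {w}) = V" using wV by auto
    show ?thesis
    proof (cases "v \<in> ter P''")
      case True
      then obtain q where q: "q \<in> set P''" "last (fst q) = v" unfolding ter_def by auto
      define NEW where "NEW = (fst q @ [w], snd q @ [b]) # remove1 q P''"
      have E: "cover' (insert w (V - {w})) A NEW \<and> length NEW = length P''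
          \<and> ter NEW = insert w (ter P'' - {last (fst q)})"
        using extend[OF P''(1) q(1) wnot sn(4) abn(2) _ A'A] sn(5) q(2) v_def NEW_def by simp
      have "ter NEW \<subseteq> ter P" using E P''(3) terP0 terP q(2) by auto
      then show ?thesis using E VV lP'' by (intro exI[of _ NEW]) simp
    next
      case nv: False
      show ?thesis
      proof (cases "u \<in> ter P''")
        case True
        then obtain q where q: "q \<in> set P''" "last (fst q) = u" unfolding ter_def by auto
        define NEW where "NEW = (fst q @ [w], snd q @ [a]) # remove1 q P''"
        have E: "cover' (insert w (V - {w})) A NEW \<and> length NEW = length P''
            \<and> ter NEW = insert w (ter P'' - {last (fst q)})"
          using extend[OF P''(1) q(1) wnot a(1) abn(1) _ A'A] prec q(2) NEW_def by simp
        have "ter NEW \<subseteq> ter P" using E P''(3) terP0 terP q(2) nv by auto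
        then show ?thesis using E VV lP'' by (intro exI[of _ NEW]) simp
      next
        case False
        then have sub: "ter P'' \<subseteq> ter rest" using nv P''(3) terP0 by auto
        have "finite (ter rest)" unfolding ter_def by simp
        then have "card (ter P'') \<le> card (ter rest)" using sub card_mono by blast
        also have "\<dots> \<le> length rest" by (rule ter_card_le)
        finally have "length P'' \<le> length rest" using cover'_card_ter[OF P''(1)] by simp
        then show ?thesis using lP'' lenP by simp
      qed
    qed
  qed
qed

lemma cover'_path_cover:
  assumes "cover' V A P" shows "path_cover V A P"
proof -
  have dP: "distinct P" using cover'_ter_distinct[OF assms] by (simp add: distinct_map)
  have disj: "\<forall>i < length P. \<forall>j < length P. i \<noteq> j \<longrightarrow> set (fst (P ! i)) \<inter> set (fst (P ! j)) = {}"
  proof (intro allI impI)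
    fix i j assume ij: "i < length P" "j < length P" "i \<noteq> j"
    then have "P ! i \<noteq> P ! j" using dP nth_eq_iff_index_eq by blast
    then show "set (fst (P ! i)) \<inter> set (fst (P ! j)) = {}"
      using cover'_disj[OF assms] ij nth_mem by blast
  qed
  show ?thesis using assms disj unfolding cover'_def path_cover_def by auto
qed

lemma alpha_ge:
  assumes "finite V" "I \<subseteq> V" "independent A I"
  shows "card I \<le> alpha V A"
proof -
  have "{card I |I. I \<subseteq> V \<and> independent A I} \<subseteq> card ` Pow V" by auto
  then have "finite {card I |I. I \<subseteq> V \<and> independent A I}" using assms(1) finite_subset by blast
  moreover have "card I \<in> {card I |I. I \<subseteq> V \<and> independent A I}" using assms by auto
  ultimately show ?thesis unfolding alpha_def by (rule Max_ge)
qed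

lemma reduce:
  assumes fin: "finite V" and arcs: "\<forall>a\<in>A. 2 \<le> length a \<and> distinct a" and C: "cover' V A P"
  shows "\<exists>P'. cover' V A P' \<and> length P' \<le> alpha V A"
  using C
proof (induction "length P" arbitrary: P rule: less_induct)
  case less
  show ?case
  proof (cases "length P \<le> alpha V A")
    case True then show ?thesis using less.prems by blast
  next
    case False
    have "\<forall>I. I \<subseteq> V \<longrightarrow> independent A I \<longrightarrow> card I < length P"
    proof (intro allI impI)
      fix I assume "I \<subseteq> V" "independent A I"
      then have "card I \<le> alpha V A" by (rule alpha_ge[OF fin])
      then show "card I < length P" using False by simp
    qed
    then obtain P' where P': "cover' V A P'" "length P' + 1 = length P"
      using main[OF fin arcs less.prems] by blast
    then show ?thesis using less.hyps[of P'] by auto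
  qed
qed

lemma concat_singletons: "concat (map (\<lambda>v. [v]) vs) = vs"
  by (induction vs) auto

theorem theorem8:
  fixes V :: "'a set" and A :: "'a list set" and k :: nat
  assumes "hyperdigraph k V A"
  shows "pc V A \<le> alpha V A"
proof -
  have fin: "finite V" using assms unfolding hyperdigraph_def by simp
  have arcs: "\<forall>a\<in>A. 2 \<le> length a \<and> distinct a" using assms unfolding hyperdigraph_def by auto
  obtain vs where vs: "set vs = V" "distinct vs" using finite_distinct_list[OF fin] by blast
  define P0 where "P0 = map (\<lambda>v. ([v], [] :: 'a list list)) vs"
  have f1: "concat (map fst P0) = vs" unfolding P0_def using concat_singletons[of vs] by (simp add: comp_def)
  have f2: "concat (map snd P0) = []" unfolding P0_def by (induction vs) auto
  have f3: "\<forall>p\<in>set P0. is_path A p" unfolding P0_def is_path_def by auto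
  have "cover' V A P0" unfolding cover'_def f1 f2 using vs f3 by simp
  then obtain P' where P': "cover' V A P'" "length P' \<le> alpha V A" using reduce[OF fin arcs] by blast
  have "path_cover V A P'" using cover'_path_cover[OF P'(1)] .
  then have "pc V A \<le> length P'" unfolding pc_def by (intro Least_le) blast
  then show ?thesis using P'(2) by simp
qed

end
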